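(* Let $\beta$ be complex with $\Re(\beta)>0$ and let $a,c$ be real numbers such that $c-a(a+t)>0$, $c-(a+1)(a+t)>0$ and $c-(a+t)^2>0$ for all $t\in[0,1]$. Then \[ \frac{\Gamma(\beta)\Gamma(\beta)}{\Gamma(2\beta)}=(c-(a+1)^2)\int_0^1\frac{(c-a(a+t))^{\beta-1}\,(c-(a+1)(a+t))^{\beta-1}}{(c-(a+t)^2)^{2\beta}}\,(c-(a-t)(a+t))\,t^{\beta-1}(1-t)^{\beta-1}\,dt . \]
   Context: Powers of positive reals are principal powers. *)

theory Defs
  imports "HOL-Analysis.Analysis"
begin

end

theory Submission
  imports Defs "HOL-Complex_Analysis.Complex_Analysis"
begin


definition "hyps (a::real) c \<longleftrightarrow> (\<forall>t\<in>{0..1::real}. c - a*(a+t) > 0 \<and> c - (a+1)*(a+t) > 0 \<and> c - (a+t)^2 > 0)"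

definition "AA a c t = c - a*(a+t)"
definition "BB a c t = c - (a+1)*(a+t)"
definition "CC a c t = c - (a+t)^2"
definition "DD a c t = c - (a-t)*(a+t)"
definition "KK a c = c - (a+1)^2"
definition "S1 a c t = t * BB a c t / CC a c t"
definition "NN a c t = (c + a*(a+1))*(c + (a+t)^2) - 2*(2*a+1)*c*(a+t)"
definition "S1' a c t = NN a c t / (CC a c t)^2"
definition "den a c t = (2*a+1)*(a+1-t) - (c + a*(a+1))"
definition "sig a c t = ((c + a*(a+1))*(a+1-t) - (2*a+1)*c) / den a c t - a"
definition "sig' a c t = (c - a^2) * KK a c / (den a c t)^2"

lemma hyps_basic:
  assumes "hyps a c" "t \<in> {0..1}"
  shows "AA a c t > 0" "BB a c t > 0" "CC a c t > 0" "DD a c t > 0" "KK a c > 0"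
    "c > a^2" "c > (a+1)^2" "c + a*(a+1) > 0" "den a c t < 0" "c > 0"
proof -
  have h0: "c - a*(a+0) > 0 \<and> c - (a+1)*(a+0) > 0 \<and> c - (a+0)^2 > 0" using bspec[OF assms(1)[unfolded hyps_def], of 0] by simp
  have h1: "c - a*(a+1) > 0 \<and> c - (a+1)*(a+1) > 0 \<and> c - (a+1)^2 > 0" using bspec[OF assms(1)[unfolded hyps_def], of 1] by simp
  have ht: "c - a*(a+t) > 0 \<and> c - (a+1)*(a+t) > 0 \<and> c - (a+t)^2 > 0" using bspec[OF assms(1)[unfolded hyps_def], of t] assms(2) by simp
  show "AA a c t > 0" "BB a c t > 0" "CC a c t > 0" using ht by (auto simp: AA_def BB_def CC_def)
  show ca: "c > a^2" using h0 by (simp add: power2_eq_square)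
  show cb: "c > (a+1)^2" using h1 by simp
  show "c > 0" using ca by (smt (verit) zero_le_power2)
  show "KK a c > 0" using cb by (simp add: KK_def)
  have "DD a c t = (c - a^2) + t^2" by (simp add: DD_def power2_eq_square algebra_simps)
  then show "DD a c t > 0" using ca by (simp add: add_pos_nonneg)
  have "c + a*(a+1) = ((c-a^2) + (c-(a+1)^2))/2 + 2*(a+1/2)^2" by (simp add: power2_eq_square field_simps)
  also have "\<dots> > 0" using ca cb by (intro add_pos_nonneg) auto
  finally show "c + a*(a+1) > 0" .
  have "den a c t = t*(a^2 - c) + (1-t)*((a+1)^2 - c)" by (simp add: den_def algebra_simps power2_eq_square)
  moreover have "t*(a^2 - c) \<le> 0" "(1-t)*((a+1)^2 - c) \<le> 0" using ca cb assms(2) by (auto intro: mult_nonneg_nonpos)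
  moreover have "t*(a^2 - c) < 0 \<or> (1-t)*((a+1)^2 - c) < 0" using ca cb assms(2)
    by (cases "t = 0") (auto intro!: mult_pos_neg)
  ultimately show "den a c t < 0" by linarith
qed

lemma one_minus_S1:
  assumes "hyps a c" "t \<in> {0..1}"
  shows "1 - S1 a c t = (1-t) * AA a c t / CC a c t"
proof -
  have C: "CC a c t \<noteq> 0" using hyps_basic[OF assms] by auto
  have "1 - S1 a c t = (CC a c t - t * BB a c t) / CC a c t" using C by (simp add: S1_def diff_divide_distrib)
  also have "CC a c t - t * BB a c t = (1-t) * AA a c t" unfolding CC_def BB_def AA_def by algebra
  finally show ?thesis .
qed

lemma S1_0: "hyps a c \<Longrightarrow> S1 a c 0 = 0" by (simp add: S1_def)
lemma S1_1: assumes "hyps a c" shows "S1 a c 1 = 1"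
proof -
  have "CC a c 1 > 0" using hyps_basic[OF assms, of 1] by auto
  moreover have "BB a c 1 = CC a c 1" by (simp add: BB_def CC_def power2_eq_square)
  ultimately show ?thesis by (simp add: S1_def)
qed

lemma S1_deriv:
  assumes "hyps a c" "t \<in> {0..1}"
  shows "(S1 a c has_real_derivative S1' a c t) (at t)"
proof -
  have C: "CC a c t \<noteq> 0" using hyps_basic[OF assms] by auto
  have "((\<lambda>t. t * (c - (a+1)*(a+t)) / (c - (a+t)^2)) has_real_derivative
     (((c - (a+1)*(a+t)) - t*(a+1)) * (c - (a+t)^2) + t * (c - (a+1)*(a+t)) * (2*(a+t))) / (c - (a+t)^2)^2) (at t)"
    using C by (auto intro!: derivative_eq_intros simp: CC_def power2_eq_square algebra_simps)
  also have "(((c - (a+1)*(a+t)) - t*(a+1)) * (c - (a+t)^2) + t * (c - (a+1)*(a+t)) * (2*(a+t))) = NN a c t"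
    unfolding NN_def by algebra
  finally show ?thesis unfolding S1_def[abs_def] BB_def S1'_def CC_def by simp
qed

lemma S1'_cont: assumes "hyps a c" shows "continuous_on {0..1} (S1' a c)"
proof -
  have "\<forall>t\<in>{0..1}. CC a c t \<noteq> 0" using hyps_basic[OF assms] by force
  then show ?thesis unfolding S1'_def[abs_def] NN_def CC_def
    by (intro continuous_intros) auto
qed

lemma NN_pos: assumes "hyps a c" "t \<in> {0..1}" shows "NN a c t > 0"
proof -
  note h = hyps_basic[OF assms]
  have "(c + a*(a+1)) * NN a c t = ((c + a*(a+1))*(a+t) - (2*a+1)*c)^2 + c*(c-a^2)*KK a c"
    by (simp add: NN_def KK_def power2_eq_square algebra_simps)
  also have "\<dots> > 0" using h by (intro add_nonneg_pos) (auto intro!: mult_pos_pos)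
  finally show ?thesis using h(8) by (simp add: zero_less_mult_iff)
qed

lemma S1'_pos: assumes "hyps a c" "t \<in> {0..1}" shows "S1' a c t > 0"
  using NN_pos[OF assms] hyps_basic[OF assms] by (simp add: S1'_def)

lemma S1'_J:
  assumes "hyps a c" "t \<in> {0..1}"
  shows "S1' a c t - (a+1)*(1 - 2*S1 a c t)/CC a c t = KK a c * DD a c t / (CC a c t)^2"
proof -
  have C: "CC a c t \<noteq> 0" using hyps_basic[OF assms] by auto
  have "S1' a c t - (a+1)*(1 - 2*S1 a c t)/CC a c t = (NN a c t - (a+1)*(CC a c t - 2*t*BB a c t)) / (CC a c t)^2"
    using C by (simp add: S1'_def S1_def field_simps) algebra
  also have "NN a c t - (a+1)*(CC a c t - 2*t*BB a c t) = KK a c * DD a c t"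
    unfolding NN_def CC_def BB_def KK_def DD_def by algebra
  finally show ?thesis .
qed

lemma sig_deriv:
  assumes "hyps a c" "t \<in> {0..1}"
  shows "(sig a c has_real_derivative sig' a c t) (at t)"
proof -
  have d: "den a c t < 0" using hyps_basic[OF assms] by auto
  have "((\<lambda>t. ((c + a*(a+1))*(a+1-t) - (2*a+1)*c) / ((2*a+1)*(a+1-t) - (c + a*(a+1))) - a) has_real_derivative 
    (- (c + a*(a+1)) * ((2*a+1)*(a+1-t) - (c + a*(a+1))) + ((c + a*(a+1))*(a+1-t) - (2*a+1)*c) * (2*a+1)) / ((2*a+1)*(a+1-t) - (c + a*(a+1)))^2) (at t)"
    using d by (auto intro!: derivative_eq_intros simp: power2_eq_square den_def algebra_simps)
  also have "(- (c + a*(a+1)) * ((2*a+1)*(a+1-t) - (c + a*(a+1))) + ((c + a*(a+1))*(a+1-t) - (2*a+1)*c) * (2*a+1)) / ((2*a+1)*(a+1-t) - (c + a*(a+1)))^2 = sig' a c t"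
    unfolding sig'_def KK_def den_def
    by (rule arg_cong[where f="\<lambda>x. x / _"]) (simp add: power2_eq_square algebra_simps)
  finally show ?thesis unfolding sig_def[abs_def] den_def by simp
qed

lemma sig'_cont: assumes "hyps a c" shows "continuous_on {0..1} (sig' a c)"
proof -
  have "\<forall>t\<in>{0..1}. den a c t \<noteq> 0" using hyps_basic[OF assms] by force
  then show ?thesis unfolding sig'_def[abs_def] den_def
    by (intro continuous_intros) auto
qed

lemma sig'_pos: assumes "hyps a c" "t \<in> {0..1}" shows "sig' a c t > 0"
  using hyps_basic[OF assms] by (simp add: sig'_def)

lemma sig_0: assumes "hyps a c" shows "sig a c 0 = 0"
proof -
  have d: "den a c 0 \<noteq> 0" using hyps_basic[OF assms, of 0] by auto
  have "(c + a*(a+1))*(a+1-0) - (2*a+1)*c = a * den a c 0" unfolding den_def by algebra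
  then show ?thesis unfolding sig_def using d by simp
qed

lemma sig_1: assumes "hyps a c" shows "sig a c 1 = 1"
proof -
  have d: "den a c 1 \<noteq> 0" using hyps_basic[OF assms, of 1] by auto
  have "(c + a*(a+1))*(a+1-1) - (2*a+1)*c = (a+1) * den a c 1" unfolding den_def by algebra
  then show ?thesis unfolding sig_def using d by simp
qed

lemma CC_sig:
  assumes "hyps a c" "t \<in> {0..1}"
  shows "CC a c (sig a c t) = CC a c (1-t) * sig' a c t"
proof -
  define P where "P = (c + a*(a+1))*(a+1-t) - (2*a+1)*c"
  define Q where "Q = den a c t"
  have d: "Q \<noteq> 0" using hyps_basic[OF assms] by (auto simp: Q_def)
  have "CC a c (sig a c t) = c - (P/Q)^2" unfolding CC_def sig_def P_def Q_def by simp
  also have "\<dots> = (c*Q^2 - P^2)/Q^2" using d by (simp add: field_simps)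
  also have "c*Q^2 - P^2 = CC a c (1-t) * ((c - a^2) * KK a c)"
    unfolding P_def Q_def den_def CC_def KK_def by algebra
  finally show ?thesis unfolding sig'_def Q_def by simp
qed

lemma S1_sig:
  assumes "hyps a c" "t \<in> {0..1}"
  shows "S1 a c (sig a c t) = 1 - S1 a c (1-t)"
proof -
  define P where "P = (c + a*(a+1))*(a+1-t) - (2*a+1)*c"
  define Q where "Q = den a c t"
  have t1: "1 - t \<in> {0..1}" using assms by auto
  note h = hyps_basic[OF assms] hyps_basic[OF assms(1) t1]
  have d: "Q \<noteq> 0" using h by (auto simp: Q_def)
  have ck: "(c - a^2) * KK a c \<noteq> 0" using h by auto
  have C1: "CC a c (1-t) \<noteq> 0" using h by auto
  have sg: "sig a c t = P/Q - a" unfolding sig_def P_def Q_def ..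
  have num: "sig a c t * BB a c (sig a c t) = (P - a*Q)*(c*Q - (a+1)*P)/Q^2"
    unfolding sg BB_def using d by (simp add: field_simps) algebra
  have dn: "CC a c (sig a c t) = CC a c (1-t) * ((c - a^2) * KK a c) / Q^2"
    unfolding CC_sig[OF assms] sig'_def Q_def by simp
  have "S1 a c (sig a c t) = (P - a*Q)*(c*Q - (a+1)*P) / (CC a c (1-t) * ((c - a^2) * KK a c))"
    unfolding S1_def num dn using d ck C1 by (simp add: divide_simps)
  also have "(P - a*Q)*(c*Q - (a+1)*P) = t * AA a c (1-t) * ((c - a^2) * KK a c)"
    unfolding P_def Q_def den_def AA_def KK_def by algebra
  also have "t * AA a c (1-t) * ((c - a^2) * KK a c) / (CC a c (1-t) * ((c - a^2) * KK a c)) = t * AA a c (1-t) / CC a c (1-t)"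
    using ck C1 by (simp add: field_simps)
  also have "\<dots> = 1 - S1 a c (1-t)" using one_minus_S1[OF assms(1) t1] by simp
  finally show ?thesis .
qed



definition "Fb (x::real) s = s powr (x-1) * (1-s) powr (x-1)"
definition "GG a c x t = Fb x (S1 a c t) * (1 - 2 * S1 a c t) / CC a c t"
definition "hR a c x t = AA a c t powr (x-1) * BB a c t powr (x-1) / CC a c t powr (2*x) * DD a c t * t powr (x-1) * (1-t) powr (x-1)"

lemma lb_to_hk:
  fixes f :: "real \<Rightarrow> real"
  assumes "set_integrable lborel {a..b} f"
  shows "f integrable_on {a..b}" "(LBINT x. f x * indicator {a..b} x) = integral {a..b} f"
proof -
  show "f integrable_on {a..b}" using set_borel_integral_eq_integral(1)[OF assms] .
  have "(LBINT x. f x * indicator {a..b} x) = (LINT x : {a..b} | lborel. f x)"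
    unfolding set_lebesgue_integral_def by (simp add: mult.commute)
  also have "\<dots> = integral {a..b} f" using set_borel_integral_eq_integral(2)[OF assms] .
  finally show "(LBINT x. f x * indicator {a..b} x) = integral {a..b} f" .
qed

lemma S1_range: assumes "hyps a c" "t \<in> {0..1}" shows "S1 a c t \<ge> 0" "S1 a c t \<le> 1"
proof -
  note h = hyps_basic[OF assms]
  show "S1 a c t \<ge> 0" using h assms(2) by (simp add: S1_def)
  have "1 - S1 a c t \<ge> 0" using h assms(2) by (simp add: one_minus_S1[OF assms])
  then show "S1 a c t \<le> 1" by simp
qed

lemma Fb_sym: "Fb x (1 - s) = Fb x s" by (simp add: Fb_def mult.commute)

lemma Fb_nonneg: "Fb x s \<ge> 0" by (simp add: Fb_def)

lemma real_step1:
  assumes "hyps a c" "x > 0"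
  shows "set_integrable lborel {0..1} (\<lambda>t. Fb x (S1 a c t) * S1' a c t)"
    "integral {0..1} (\<lambda>t. Fb x (S1 a c t) * S1' a c t) = Beta x x"
proof -
  have int: "set_integrable lborel {S1 a c 0..S1 a c 1} (Fb x)"
    unfolding S1_0[OF assms(1)] S1_1[OF assms(1)] Fb_def[abs_def] using integrable_Beta[OF assms(2) assms(2)] .
  note sub = integral_substitution[OF int S1_deriv[OF assms(1)] S1'_cont[OF assms(1)] less_imp_le[OF S1'_pos[OF assms(1)]]]
  show si: "set_integrable lborel {0..1} (\<lambda>t. Fb x (S1 a c t) * S1' a c t)" using sub(1) by simp
  have "integral {0..1} (\<lambda>t. Fb x (S1 a c t) * S1' a c t) = (LBINT t. Fb x t * indicator {0..1} t)"
    using sub(2) lb_to_hk(2)[OF si] unfolding S1_0[OF assms(1)] S1_1[OF assms(1)] by simp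
  also have "\<dots> = integral {0..1} (Fb x)"
    using lb_to_hk(2) int unfolding S1_0[OF assms(1)] S1_1[OF assms(1)] by blast
  also have "\<dots> = Beta x x"
    using has_integral_Beta_real[OF assms(2) assms(2)] unfolding Fb_def[abs_def] by (rule integral_unique)
  finally show "integral {0..1} (\<lambda>t. Fb x (S1 a c t) * S1' a c t) = Beta x x" .
qed

lemma GG_bound:
  assumes "hyps a c" "t \<in> {0..1}"
  shows "\<bar>GG a c x t\<bar> \<le> ((c + a*(a+1)) / ((c - a^2) * KK a c)) * (Fb x (S1 a c t) * S1' a c t)"
proof -
  note h = hyps_basic[OF assms]
  define M where "M = (c + a*(a+1)) / ((c - a^2) * KK a c)"
  have M0: "M > 0" using h by (simp add: M_def)
  have s: "0 \<le> S1 a c t" "S1 a c t \<le> 1" using S1_range[OF assms] by auto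
  have "\<bar>1 - 2 * S1 a c t\<bar> \<le> 1" using s by linarith
  have "(c + a*(a+1)) * NN a c t = ((c + a*(a+1))*(a+t) - (2*a+1)*c)^2 + c*(c-a^2)*KK a c"
    by (simp add: NN_def KK_def power2_eq_square algebra_simps)
  then have "(c + a*(a+1)) * NN a c t \<ge> c*((c-a^2)*KK a c)" by simp
  then have "M * NN a c t \<ge> c" using h unfolding M_def by (simp add: field_simps)
  moreover have "c \<ge> CC a c t" by (simp add: CC_def)
  ultimately have MN: "M * NN a c t \<ge> CC a c t" by linarith
  have "1 / CC a c t \<le> M * S1' a c t"
    using MN h unfolding S1'_def by (simp add: field_simps power2_eq_square)
  have "\<bar>GG a c x t\<bar> = Fb x (S1 a c t) * \<bar>1 - 2 * S1 a c t\<bar> / CC a c t"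
    using h Fb_nonneg[of x] by (simp add: GG_def abs_mult)
  also have "\<dots> \<le> Fb x (S1 a c t) * 1 / CC a c t"
    using h Fb_nonneg[of x] \<open>\<bar>1 - 2 * S1 a c t\<bar> \<le> 1\<close> by (intro divide_right_mono mult_left_mono) auto
  also have "\<dots> = Fb x (S1 a c t) * (1 / CC a c t)" by simp
  also have "\<dots> \<le> Fb x (S1 a c t) * (M * S1' a c t)"
    using \<open>1 / CC a c t \<le> M * S1' a c t\<close> Fb_nonneg[of x] by (intro mult_left_mono) auto
  finally show ?thesis unfolding M_def by (simp add: mult_ac)
qed

lemma GG_integrable:
  assumes "hyps a c" "x > 0"
  shows "set_integrable lborel {0..1} (GG a c x)"
proof -
  define M where "M = (c + a*(a+1)) / ((c - a^2) * KK a c)"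
  have i1: "set_integrable lborel {0..1} (\<lambda>t. M * (Fb x (S1 a c t) * S1' a c t))"
    using real_step1(1)[OF assms] by (rule set_integrable_mult_right)
  show ?thesis
    unfolding set_integrable_def
  proof (rule Bochner_Integration.integrable_bound[OF i1[unfolded set_integrable_def]])
    show "(\<lambda>t. indicat_real {0..1} t *\<^sub>R GG a c x t) \<in> borel_measurable lborel"
      unfolding GG_def Fb_def S1_def BB_def CC_def by measurable
    show "AE t in lborel. norm (indicat_real {0..1} t *\<^sub>R GG a c x t) \<le> norm (indicat_real {0..1} t *\<^sub>R (M * (Fb x (S1 a c t) * S1' a c t)))"
    proof (rule AE_I2)
      fix t :: real
      show "norm (indicat_real {0..1} t *\<^sub>R GG a c x t) \<le> norm (indicat_real {0..1} t *\<^sub>R (M * (Fb x (S1 a c t) * S1' a c t)))"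
      proof (cases "t \<in> {0..1}")
        case True
        have "0 \<le> M * (Fb x (S1 a c t) * S1' a c t)"
          using hyps_basic[OF assms(1) True] S1'_pos[OF assms(1) True] Fb_nonneg[of x]
          by (simp add: M_def)
        moreover have "norm (indicat_real {0..1} t *\<^sub>R GG a c x t) = \<bar>GG a c x t\<bar>" using True by simp
        moreover have "norm (indicat_real {0..1} t *\<^sub>R (M * (Fb x (S1 a c t) * S1' a c t))) = M * (Fb x (S1 a c t) * S1' a c t)"
          using True calculation(1) by simp
        ultimately show ?thesis using GG_bound[OF assms(1) True, of x] unfolding M_def by simp
      qed simp
    qed
  qed
qed

lemma GG_refl:
  assumes "hyps a c" "t \<in> {0..1}"
  shows "GG a c x (sig a c t) * sig' a c t = - GG a c x (1 - t)"
proof -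
  have sp: "sig' a c t > 0" using sig'_pos[OF assms] .
  have "1 - t \<in> {0..1}" using assms by auto
  then have C1: "CC a c (1-t) > 0" using hyps_basic[OF assms(1)] by blast
  show ?thesis unfolding GG_def S1_sig[OF assms] CC_sig[OF assms] Fb_sym using sp C1
    by (simp add: field_simps)
qed

lemma integral_reflect01:
  fixes f :: "real \<Rightarrow> real"
  shows "integral {0..1} (\<lambda>t. f (1 - t)) = integral {0..1} f"
proof -
  have "integral {0..1} (\<lambda>t. f (1 - t)) = integral {-1..0} (f \<circ> (+) 1)"
    using Henstock_Kurzweil_Integration.integral_reflect_real[of 0 "-1" "f \<circ> (+) 1"] by (simp add: o_def)
  also have "\<dots> = integral {-1+1..0+1} f" by (rule integral_shift_Icc_real)
  finally show ?thesis by simp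
qed

lemma real_step2:
  assumes "hyps a c" "x > 0"
  shows "GG a c x integrable_on {0..1}" "integral {0..1} (GG a c x) = 0"
proof -
  have int: "set_integrable lborel {sig a c 0..sig a c 1} (GG a c x)"
    unfolding sig_0[OF assms(1)] sig_1[OF assms(1)] using GG_integrable[OF assms] .
  note sub = integral_substitution[OF int sig_deriv[OF assms(1)] sig'_cont[OF assms(1)] less_imp_le[OF sig'_pos[OF assms(1)]]]
  have si: "set_integrable lborel {0..1} (\<lambda>t. GG a c x (sig a c t) * sig' a c t)" using sub(1) by simp
  have "integral {0..1} (GG a c x) = (LBINT t. GG a c x t * indicator {0..1} t)"
    using lb_to_hk(2)[OF GG_integrable[OF assms]] by simp
  also have "\<dots> = integral {0..1} (\<lambda>t. GG a c x (sig a c t) * sig' a c t)"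
    using sub(2) lb_to_hk(2)[OF si] unfolding sig_0[OF assms(1)] sig_1[OF assms(1)] by simp
  also have "\<dots> = integral {0..1} (\<lambda>t. - GG a c x (1 - t))"
    by (rule integral_cong) (use GG_refl[OF assms(1)] in auto)
  also have "\<dots> = - integral {0..1} (\<lambda>t. GG a c x (1 - t))" by (rule integral_neg)
  also have "\<dots> = - integral {0..1} (GG a c x)" by (simp add: integral_reflect01)
  finally show "integral {0..1} (GG a c x) = 0" by simp
  show "GG a c x integrable_on {0..1}" using lb_to_hk(1)[OF GG_integrable[OF assms]] .
qed

lemma hR_eq_Fb:
  assumes "hyps a c" "t \<in> {0..1}"
  shows "hR a c x t = Fb x (S1 a c t) * DD a c t / (CC a c t)^2"
proof -
  note h = hyps_basic[OF assms]
  consider "t = 0" | "t = 1" | "t \<in> {0<..<1}" using assms(2) by fastforce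
  then show ?thesis
  proof cases
    case 1 then show ?thesis by (simp add: hR_def Fb_def S1_0[OF assms(1)])
  next
    case 2 then show ?thesis by (simp add: hR_def Fb_def S1_1[OF assms(1)])
  next
    case 3
    define p where "p = x - 1"
    have C: "CC a c t > 0" using h by auto
    have e: "CC a c t powr (2*x) = CC a c t powr p * CC a c t powr p * (CC a c t)^2"
    proof -
      have "CC a c t powr (2*x) = CC a c t powr (p + p + 2)" by (simp add: p_def algebra_simps)
      also have "\<dots> = CC a c t powr p * CC a c t powr p * CC a c t powr 2" by (simp only: powr_add)
      also have "CC a c t powr 2 = (CC a c t)^2" using C by simp
      finally show ?thesis .
    qed
    have cp: "CC a c t powr p > 0" using C by simp
    have "Fb x (S1 a c t) = (t * BB a c t / CC a c t) powr p * ((1-t) * AA a c t / CC a c t) powr p"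
      unfolding Fb_def one_minus_S1[OF assms] p_def by (simp add: S1_def)
    also have "\<dots> = t powr p * BB a c t powr p / CC a c t powr p * ((1-t) powr p * AA a c t powr p / CC a c t powr p)"
      by (simp add: powr_divide powr_mult)
    finally have "Fb x (S1 a c t) = \<dots>" .
    then show ?thesis unfolding hR_def p_def[symmetric] e using cp C
      by (simp add: field_simps)
  qed
qed

lemma hR_decomp:
  assumes "hyps a c" "t \<in> {0..1}"
  shows "hR a c x t = (Fb x (S1 a c t) * S1' a c t - (a+1) * GG a c x t) / KK a c"
proof -
  note h = hyps_basic[OF assms]
  have "Fb x (S1 a c t) * S1' a c t - (a+1) * GG a c x t
      = Fb x (S1 a c t) * (S1' a c t - (a+1)*(1 - 2*S1 a c t)/CC a c t)"
    unfolding GG_def by (simp add: algebra_simps)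
  also have "\<dots> = Fb x (S1 a c t) * (KK a c * DD a c t / (CC a c t)^2)" unfolding S1'_J[OF assms] ..
  finally show ?thesis unfolding hR_eq_Fb[OF assms] using h by (simp add: field_simps)
qed

lemma real_main:
  assumes "hyps a c" "x > 0"
  shows "(hR a c x has_integral Beta x x / KK a c) {0..1}"
proof -
  have i1: "(\<lambda>t. Fb x (S1 a c t) * S1' a c t) integrable_on {0..1}"
    using lb_to_hk(1)[OF real_step1(1)[OF assms]] .
  have "((\<lambda>t. (Fb x (S1 a c t) * S1' a c t - (a+1) * GG a c x t) / KK a c) has_integral
        (Beta x x - (a+1) * 0) / KK a c) {0..1}"
    apply (intro has_integral_divide has_integral_diff has_integral_mult_right)
    using integrable_integral[OF i1] real_step1(2)[OF assms] integrable_integral[OF real_step2(1)[OF assms]] real_step2(2)[OF assms]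
    by auto
  then have "((\<lambda>t. (Fb x (S1 a c t) * S1' a c t - (a+1) * GG a c x t) / KK a c) has_integral
        Beta x x / KK a c) {0..1}" by simp
  then show ?thesis
    by (rule has_integral_eq[rotated]) (simp add: hR_decomp[OF assms(1)])
qed



definition "hC a c (\<beta>::complex) (t::real) =
       (complex_of_real (AA a c t) powr (\<beta> - 1)) *
       (complex_of_real (BB a c t) powr (\<beta> - 1)) /
       (complex_of_real (CC a c t) powr (2 * \<beta>)) *
       complex_of_real (DD a c t) *
       (complex_of_real t powr (\<beta> - 1)) *
       (complex_of_real (1 - t) powr (\<beta> - 1))"

definition "L1 a c t = ln (AA a c t) + ln (BB a c t) + ln t + ln (1 - t)"

definition "hE a c (\<beta>::complex) (t::real) =
   complex_of_real (DD a c t) * exp ((\<beta> - 1) * of_real (L1 a c t) - 2 * \<beta> * of_real (ln (CC a c t)))"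

lemma norm_hC:
  assumes "hyps a c" "t \<in> {0..1}"
  shows "norm (hC a c \<beta> t) = hR a c (Re \<beta>) t"
proof -
  note h = hyps_basic[OF assms]
  have n: "norm (complex_of_real X powr w) = X powr Re w" if "X \<ge> 0" for X w
    using that by (subst norm_powr_real_powr) auto
  show ?thesis using h assms(2) unfolding hC_def hR_def
    by (simp add: norm_mult norm_divide n del: of_real_diff)
qed

lemma hC_of_real:
  assumes "hyps a c" "t \<in> {0..1}"
  shows "hC a c (complex_of_real x) t = complex_of_real (hR a c x t)"
proof -
  note h = hyps_basic[OF assms]
  have n: "complex_of_real X powr (complex_of_real x - 1) = of_real (X powr (x - 1))" if "X \<ge> 0" for X
    using powr_of_real[OF that, of "x-1"] by simp
  have n2: "complex_of_real X powr (2 * complex_of_real x) = of_real (X powr (2*x))" if "X \<ge> 0" for X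
    using powr_of_real[OF that, of "2*x"] by simp
  show ?thesis using h assms(2) unfolding hC_def hR_def
    by (simp add: n n2 del: of_real_diff)
qed

lemma hC_exp:
  assumes "hyps a c" "t \<in> {0<..<1}"
  shows "hC a c \<beta> t = hE a c \<beta> t"
proof -
  have t: "t \<in> {0..1}" using assms(2) by auto
  note h = hyps_basic[OF assms(1) t]
  have e: "complex_of_real X powr w = exp (w * of_real (ln X))" if "X > 0" for X w
    using that by (simp add: powr_def Ln_of_real)
  have "hC a c \<beta> t = of_real (DD a c t) * (exp ((\<beta> - 1) * of_real (ln (AA a c t))) * exp ((\<beta> - 1) * of_real (ln (BB a c t)))
      * exp ((\<beta> - 1) * of_real (ln t)) * exp ((\<beta> - 1) * of_real (ln (1-t))) / exp (2 * \<beta> * of_real (ln (CC a c t))))"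
    unfolding hC_def using h assms(2) by (simp add: e del: of_real_diff)
  also have "\<dots> = hE a c \<beta> t"
    unfolding hE_def L1_def by (simp add: exp_add[symmetric] exp_diff[symmetric] algebra_simps)
  finally show ?thesis .
qed

lemma hR_mono:
  assumes "hyps a c" "t \<in> {0..1}" "0 < s0" "s0 \<le> s"
  shows "hR a c s t \<le> hR a c s0 t"
proof -
  note h = hyps_basic[OF assms(1,2)]
  have r: "0 \<le> S1 a c t" "S1 a c t \<le> 1" using S1_range[OF assms(1,2)] by auto
  have q: "0 \<le> S1 a c t * (1 - S1 a c t)" "S1 a c t * (1 - S1 a c t) \<le> 1"
    using r by (auto intro: mult_le_one)
  have "Fb s (S1 a c t) \<le> Fb s0 (S1 a c t)"
    unfolding Fb_def powr_mult[symmetric] using q assms(4) by (intro powr_mono') auto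
  then show ?thesis unfolding hR_eq_Fb[OF assms(1,2)] using h
    by (intro divide_right_mono mult_right_mono) auto
qed

lemma hE_cont:
  assumes "hyps a c" "{u..v} \<subseteq> {0<..<1}"
  shows "continuous_on {u..v} (\<lambda>t. hE a c \<beta> t)"
proof -
  have p: "AA a c t \<noteq> 0 \<and> BB a c t \<noteq> 0 \<and> CC a c t \<noteq> 0 \<and> t \<noteq> 0 \<and> 1 - t \<noteq> 0" if "t \<in> {u..v}" for t
  proof -
    have "t \<in> {0<..<1}" using that assms(2) by auto
    then show ?thesis using hyps_basic[OF assms(1), of t] by auto
  qed
  show ?thesis unfolding hE_def L1_def AA_def[symmetric] BB_def[symmetric] CC_def[symmetric] DD_def[symmetric]
    unfolding AA_def BB_def CC_def DD_def
    by (intro continuous_intros) (use p in \<open>auto simp: AA_def BB_def CC_def\<close>)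
qed

lemma hE_cont_open:
  assumes "hyps a c"
  shows "continuous_on {0<..<1} (\<lambda>t. hE a c \<beta> t)"
proof -
  have p: "AA a c t \<noteq> 0 \<and> BB a c t \<noteq> 0 \<and> CC a c t \<noteq> 0 \<and> t \<noteq> 0 \<and> 1 - t \<noteq> 0" if "t \<in> {0<..<1}" for t
    using that hyps_basic[OF assms(1), of t] by auto
  show ?thesis unfolding hE_def L1_def
    unfolding AA_def BB_def CC_def DD_def
    by (intro continuous_intros) (use p in \<open>auto simp: AA_def BB_def CC_def\<close>)
qed

lemma hR_integrable: "hyps a c \<Longrightarrow> x > 0 \<Longrightarrow> hR a c x integrable_on {0..1}"
  using real_main by blast

lemma hC_integrable:
  assumes "hyps a c" "Re \<beta> > 0"
  shows "hC a c \<beta> integrable_on {0..1}"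
proof -
  have cont: "continuous_on {0<..<1} (hC a c \<beta>)"
    by (rule continuous_on_eq[OF hE_cont_open[OF assms(1), of \<beta>]]) (simp add: hC_exp[OF assms(1)])
  have gi: "hR a c (Re \<beta>) integrable_on {0<..<1}"
    using hR_integrable[OF assms] integrable_on_Icc_iff_Ioo by blast
  have "hC a c \<beta> absolutely_integrable_on {0<..<1}"
    by (rule measurable_bounded_by_integrable_imp_absolutely_integrable[OF continuous_imp_measurable_on_sets_lebesgue[OF cont] _ gi])
       (auto simp: norm_hC[OF assms(1)])
  then have "hC a c \<beta> integrable_on {0<..<1}" using set_lebesgue_integral_eq_integral(1) by blast
  then show ?thesis using integrable_on_Icc_iff_Ioo by blast
qed

lemma hE_deriv:
  "((\<lambda>\<beta>. hE a c \<beta> t) has_field_derivative hE a c \<beta> t * (of_real (L1 a c t) - 2 * of_real (ln (CC a c t)))) (at \<beta> within X)"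
  unfolding hE_def
  apply (rule derivative_eq_intros refl)+
  apply (simp add: algebra_simps)
  done

lemma Fn_holo:
  assumes "hyps a c" "0 < u" "v < 1"
  shows "(\<lambda>\<beta>. integral {u..v} (hC a c \<beta>)) holomorphic_on UNIV"
proof -
  have sub: "{u..v} \<subseteq> {0<..<1}" using assms by auto
  have eq: "integral {u..v} (hC a c \<beta>) = integral (cbox u v) (hE a c \<beta>)" for \<beta>
    unfolding cbox_interval by (rule integral_cong) (use sub hC_exp[OF assms(1)] in auto)
  have p: "AA a c t > 0 \<and> BB a c t > 0 \<and> CC a c t > 0 \<and> t > 0 \<and> 1 - t > 0" if "t \<in> {u..v}" for t
  proof -
    have "t \<in> {0<..<1}" using that sub by auto
    then show ?thesis using hyps_basic[OF assms(1), of t] by auto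
  qed
  have "(\<lambda>\<beta>. integral (cbox u v) (hE a c \<beta>)) holomorphic_on UNIV"
  proof (rule leibniz_rule_holomorphic)
    show "((\<lambda>\<beta>. hE a c \<beta> t) has_field_derivative hE a c \<beta> t * (of_real (L1 a c t) - 2 * of_real (ln (CC a c t)))) (at \<beta> within UNIV)"
      for \<beta> t by (rule hE_deriv)
    show "hE a c \<beta> integrable_on cbox u v" for \<beta>
      unfolding cbox_interval by (rule integrable_continuous_interval[OF hE_cont[OF assms(1) sub]])
    show "convex (UNIV :: complex set)" by simp
    show "continuous_on (UNIV \<times> cbox u v) (\<lambda>(\<beta>, t). hE a c \<beta> t * (of_real (L1 a c t) - 2 * of_real (ln (CC a c t))))"
    proof -
      have a1: "continuous_on {u..v} (AA a c)" unfolding AA_def[abs_def] by (intro continuous_intros)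
      have b1: "continuous_on {u..v} (BB a c)" unfolding BB_def[abs_def] by (intro continuous_intros)
      have cc1: "continuous_on {u..v} (CC a c)" unfolding CC_def[abs_def] by (intro continuous_intros)
      have l1: "continuous_on {u..v} (L1 a c)" unfolding L1_def[abs_def]
        by (intro continuous_intros a1 b1) (use p in force)+
      have l2: "continuous_on {u..v} (\<lambda>t. ln (CC a c t))"
        by (intro continuous_intros cc1) (use p in force)
      have l3: "continuous_on {u..v} (DD a c)" unfolding DD_def[abs_def]
        by (intro continuous_intros)
      have c1: "continuous_on (UNIV \<times> {u..v}) (\<lambda>x. L1 a c (snd x))"
        by (rule continuous_on_compose2[OF l1 continuous_on_snd]) auto
      have c2: "continuous_on (UNIV \<times> {u..v}) (\<lambda>x. ln (CC a c (snd x)))"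
        by (rule continuous_on_compose2[OF l2 continuous_on_snd]) auto
      have c3: "continuous_on (UNIV \<times> {u..v}) (\<lambda>x. DD a c (snd x))"
        by (rule continuous_on_compose2[OF l3 continuous_on_snd]) auto
      show ?thesis unfolding split_beta hE_def cbox_interval
        by (intro continuous_intros c1 c2 c3)
    qed
  qed
  then show ?thesis unfolding eq .
qed

lemma tail_bound:
  assumes "hyps a c" "0 < s0" "s0 \<le> Re \<beta>" "0 < d" "d \<le> 1/2"
  shows "norm (integral {0..1} (hC a c \<beta>) - integral {d..1-d} (hC a c \<beta>))
     \<le> integral {0..d} (hR a c s0) + integral {1-d..1} (hR a c s0)"
proof -
  have hi: "hC a c \<beta> integrable_on {0..1}" using hC_integrable[OF assms(1)] assms(2,3) by auto
  have gi: "hR a c s0 integrable_on {0..1}" using hR_integrable[OF assms(1,2)] .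
  have i0: "integral {0..d} (hC a c \<beta>) + integral {d..1} (hC a c \<beta>) = integral {0..1} (hC a c \<beta>)"
    using assms(4,5) by (intro Henstock_Kurzweil_Integration.integral_combine hi) auto
  have hi1: "hC a c \<beta> integrable_on {d..1}" by (rule integrable_on_subinterval[OF hi]) (use assms in auto)
  have i1: "integral {d..1-d} (hC a c \<beta>) + integral {1-d..1} (hC a c \<beta>) = integral {d..1} (hC a c \<beta>)"
    using assms(4,5) by (intro Henstock_Kurzweil_Integration.integral_combine hi1) auto
  have bd: "norm (hC a c \<beta> t) \<le> hR a c s0 t" if "t \<in> {0..1}" for t
    unfolding norm_hC[OF assms(1) that] by (rule hR_mono[OF assms(1) that assms(2,3)])
  have s0d: "{0..d} \<subseteq> {0..1}" "{1-d..1} \<subseteq> {0..(1::real)}" using assms(4,5) by auto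
  have n0: "norm (integral {0..d} (hC a c \<beta>)) \<le> integral {0..d} (hR a c s0)"
    by (rule integral_norm_bound_integral[OF integrable_on_subinterval[OF hi s0d(1)] integrable_on_subinterval[OF gi s0d(1)]])
       (use bd s0d in blast)
  have n1: "norm (integral {1-d..1} (hC a c \<beta>)) \<le> integral {1-d..1} (hR a c s0)"
    by (rule integral_norm_bound_integral[OF integrable_on_subinterval[OF hi s0d(2)] integrable_on_subinterval[OF gi s0d(2)]])
       (use bd s0d in blast)
  have e: "integral {0..1} (hC a c \<beta>) = integral {0..d} (hC a c \<beta>) + (integral {d..1-d} (hC a c \<beta>) + integral {1-d..1} (hC a c \<beta>))"
    unfolding i1 i0 ..
  have "integral {0..1} (hC a c \<beta>) - integral {d..1-d} (hC a c \<beta>) = integral {0..d} (hC a c \<beta>) + integral {1-d..1} (hC a c \<beta>)"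
    unfolding e by simp
  also have "norm \<dots> \<le> norm (integral {0..d} (hC a c \<beta>)) + norm (integral {1-d..1} (hC a c \<beta>))" by (rule norm_triangle_ineq)
  also have "\<dots> \<le> integral {0..d} (hR a c s0) + integral {1-d..1} (hR a c s0)" using n0 n1 by simp
  finally show ?thesis .
qed

lemma tail_tendsto:
  fixes g :: "real \<Rightarrow> real"
  assumes gi: "g integrable_on {0..1}"
  shows "(\<lambda>n. integral {0..1/(real n+3)} g + integral {1-1/(real n+3)..1} g) \<longlonglongrightarrow> 0"
proof -
  define J where "J y = integral {0..y} g" for y
  have Jc: "continuous_on {0..1} J" unfolding J_def by (rule indefinite_integral_continuous_1[OF gi])
  have dlim: "(\<lambda>n. 1/(real n+3)) \<longlonglongrightarrow> 0"
  proof -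
    have "(\<lambda>n. 1/(real (n+3))) \<longlonglongrightarrow> 0" using LIMSEQ_ignore_initial_segment[OF lim_inverse_n', of 3] by (simp add: divide_inverse)
    then show ?thesis by (simp add: add.commute)
  qed
  have dmem: "\<forall>\<^sub>F n in sequentially. 1/(real n+3) \<in> {0..1}" by (auto intro!: always_eventually)
  have dmem2: "\<forall>\<^sub>F n in sequentially. 1 - 1/(real n+3) \<in> {0..1}" by (auto intro!: always_eventually)
  have t1: "(\<lambda>n. J (1/(real n+3))) \<longlonglongrightarrow> J 0"
    using continuous_on_tendsto_compose[OF Jc dlim _ dmem] by (simp add: o_def)
  have dlim2: "(\<lambda>n. 1 - 1/(real n+3)) \<longlonglongrightarrow> 1" using tendsto_diff[OF tendsto_const dlim, of 1] by simp
  have t2: "(\<lambda>n. J (1 - 1/(real n+3))) \<longlonglongrightarrow> J 1"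
    using continuous_on_tendsto_compose[OF Jc dlim2 _ dmem2] by (simp add: o_def)
  have e: "integral {0..1/(real n+3)} g + integral {1-1/(real n+3)..1} g = J (1/(real n+3)) + (J 1 - J (1 - 1/(real n+3)))" for n
  proof -
    have "integral {0..1 - 1/(real n+3)} g + integral {1-1/(real n+3)..1} g = integral {0..1} g"
      by (intro Henstock_Kurzweil_Integration.integral_combine gi) auto
    then show ?thesis unfolding J_def by (simp add: algebra_simps)
  qed
  have "(\<lambda>n. J (1/(real n+3)) + (J 1 - J (1 - 1/(real n+3)))) \<longlonglongrightarrow> J 0 + (J 1 - J 1)"
    by (intro tendsto_add tendsto_diff t1 t2 tendsto_const)
  then show ?thesis unfolding e by (simp add: J_def)
qed

lemma Gf_holo:
  assumes "hyps a c"
  shows "(\<lambda>\<beta>. integral {0..1} (hC a c \<beta>)) holomorphic_on {\<beta>. Re \<beta> > 0}"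
  unfolding holomorphic_on_def
proof
  fix z :: complex assume "z \<in> {\<beta>. Re \<beta> > 0}"
  then have z: "Re z > 0" by simp
  define r where "r = Re z / 2"
  have r: "r > 0" using z by (simp add: r_def)
  have reb: "Re \<beta> \<ge> r" if "\<beta> \<in> cball z r" for \<beta>
  proof -
    have "\<bar>Re (z - \<beta>)\<bar> \<le> cmod (z - \<beta>)" by (rule abs_Re_le_cmod)
    also have "\<dots> \<le> r" using that by (simp add: dist_norm)
    finally show ?thesis unfolding r_def by (simp only: minus_complex.sel)
  qed
  define Fn where "Fn n \<beta> = integral {1/(real n+3)..1-1/(real n+3)} (hC a c \<beta>)" for n \<beta>
  define Gf where "Gf \<beta> = integral {0..1} (hC a c \<beta>)" for \<beta>
  define T where "T n = integral {0..1/(real n+3)} (hR a c r) + integral {1-1/(real n+3)..1} (hR a c r)" for n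
  have Tl: "T \<longlonglongrightarrow> 0" unfolding T_def[abs_def] by (rule tail_tendsto[OF hR_integrable[OF assms r]])
  have cont: "\<forall>\<^sub>F n in sequentially. continuous_on (cball z r) (Fn n) \<and> Fn n holomorphic_on ball z r"
  proof (intro always_eventually allI conjI)
    fix n
    have "Fn n holomorphic_on UNIV" unfolding Fn_def[abs_def] by (rule Fn_holo[OF assms]) auto
    then show "continuous_on (cball z r) (Fn n)" "Fn n holomorphic_on ball z r"
      by (auto intro: holomorphic_on_imp_continuous_on holomorphic_on_subset)
  qed
  have ulim: "uniform_limit (cball z r) Fn Gf sequentially"
  proof (rule uniform_limitI)
    fix e :: real assume "e > 0"
    then have "\<forall>\<^sub>F n in sequentially. T n < e" using order_tendstoD(2)[OF Tl] by auto
    then show "\<forall>\<^sub>F n in sequentially. \<forall>\<beta>\<in>cball z r. dist (Fn n \<beta>) (Gf \<beta>) < e"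
    proof (rule eventually_mono)
      fix n assume Tn: "T n < e"
      show "\<forall>\<beta>\<in>cball z r. dist (Fn n \<beta>) (Gf \<beta>) < e"
      proof
        fix \<beta> assume "\<beta> \<in> cball z r"
        then have rb: "r \<le> Re \<beta>" by (rule reb)
        have "dist (Fn n \<beta>) (Gf \<beta>) = norm (Gf \<beta> - Fn n \<beta>)" by (simp add: dist_norm norm_minus_commute)
        also have "\<dots> \<le> T n" unfolding Gf_def Fn_def T_def
          by (rule tail_bound[OF assms r rb]) (auto simp: field_simps)
        finally show "dist (Fn n \<beta>) (Gf \<beta>) < e" using Tn by simp
      qed
    qed
  qed
  obtain "Gf holomorphic_on ball z r"
    using holomorphic_uniform_limit[OF cont ulim] by auto
  then have "Gf field_differentiable (at z)"
    by (rule holomorphic_on_imp_differentiable_at) (use r in auto)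
  then show "(\<lambda>\<beta>. integral {0..1} (hC a c \<beta>)) field_differentiable at z within {\<beta>. 0 < Re \<beta>}"
    unfolding Gf_def[abs_def] by (rule field_differentiable_at_within)
qed

lemma Re_pos_not_nonpos_Int: "Re z > 0 \<Longrightarrow> z \<notin> \<int>\<^sub>\<le>\<^sub>0"
  by (auto elim!: nonpos_Ints_cases)

lemma main_cx:
  assumes "hyps a c" "Re \<beta> > 0"
  shows "Gamma \<beta> * Gamma \<beta> / Gamma (2 * \<beta>) = of_real (KK a c) * integral {0..1} (hC a c \<beta>)"
proof -
  define S where "S = {z::complex. Re z > 0}"
  define \<Phi> where "\<Phi> z = of_real (KK a c) * integral {0..1} (hC a c z) - Gamma z * Gamma z / Gamma (2 * z)" for z
  have nz: "Gamma (2 * z) \<noteq> 0" if "z \<in> S" for z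
    using that Re_pos_not_nonpos_Int[of "2*z"] by (auto simp: S_def Gamma_eq_zero_iff)
  have gf: "(\<lambda>z. integral {0..1} (hC a c z)) holomorphic_on S" using Gf_holo[OF assms(1)] unfolding S_def .
  have g1: "Gamma holomorphic_on S"
    by (rule holomorphic_Gamma) (use Re_pos_not_nonpos_Int in \<open>auto simp: S_def\<close>)
  have g2: "(\<lambda>z. Gamma (2 * z)) holomorphic_on S"
    by (rule holomorphic_Gamma') (use Re_pos_not_nonpos_Int[of "2 * _"] in \<open>auto simp: S_def intro!: holomorphic_intros\<close>)
  have holo: "\<Phi> holomorphic_on S"
    unfolding \<Phi>_def[abs_def]
    by (intro holomorphic_on_diff holomorphic_on_mult holomorphic_on_const holomorphic_on_divide gf g1 g2 nz)
  have real0: "\<Phi> (of_real x) = 0" if "x > 0" for x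
  proof -
    have "integral {0..1} (hC a c (of_real x)) = integral {0..1} (\<lambda>t. complex_of_real (hR a c x t))"
      by (rule integral_cong) (use hC_of_real[OF assms(1)] in auto)
    also have "\<dots> = of_real (Beta x x / KK a c)"
      by (rule integral_unique[OF has_integral_of_real[OF real_main[OF assms(1) that]]])
    also have "\<dots> = of_real (Beta x x) / of_real (KK a c)" by (rule of_real_divide)
    finally have ie: "integral {0..1} (hC a c (of_real x)) = of_real (Beta x x) / of_real (KK a c)" .
    have kz: "complex_of_real (KK a c) \<noteq> 0" using hyps_basic(5)[OF assms(1), of 0] by simp
    have "of_real (KK a c) * integral {0..1} (hC a c (of_real x)) = of_real (Beta x x)"
      unfolding ie times_divide_eq_right using kz by (rule nonzero_mult_div_cancel_left)
    also have "\<dots> = Gamma (of_real x) * Gamma (of_real x) / Gamma (2 * of_real x)"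
      unfolding Beta_def of_real_divide of_real_mult Gamma_complex_of_real[symmetric]
      by (simp only: of_real_add mult_2)
    finally have "of_real (KK a c) * integral {0..1} (hC a c (of_real x)) = Gamma (of_real x) * Gamma (of_real x) / Gamma (2 * of_real x)" .
    then show ?thesis unfolding \<Phi>_def by (simp only: diff_self)
  qed
  have "\<Phi> \<beta> = 0"
  proof (rule analytic_continuation[OF holo])
    show "open S" unfolding S_def by (rule open_halfspace_Re_gt)
    show "connected S" unfolding S_def by (rule convex_connected[OF convex_halfspace_Re_gt])
    show "complex_of_real ` {0::real<..} \<subseteq> S" by (auto simp: S_def)
    show "1 \<in> S" by (simp add: S_def)
    show "\<beta> \<in> S" using assms(2) by (simp add: S_def)
    show "\<Phi> z = 0" if "z \<in> complex_of_real ` {0::real<..}" for z using that real0 by auto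
    show "1 islimpt (complex_of_real ` {0::real<..})"
      unfolding islimpt_approachable
    proof (intro allI impI)
      fix e :: real assume e: "e > 0"
      show "\<exists>x'\<in>complex_of_real ` {0::real<..}. x' \<noteq> 1 \<and> dist x' 1 < e"
      proof (rule bexI[where x="complex_of_real (1 + e/2)"])
        show "complex_of_real (1 + e/2) \<in> of_real ` {0::real<..}" by (rule imageI) (use e in simp)
        have "dist (complex_of_real (1 + e/2)) (complex_of_real 1) = dist (1 + e/2) 1" by (rule dist_of_real)
        then show "complex_of_real (1 + e/2) \<noteq> 1 \<and> dist (complex_of_real (1 + e/2)) 1 < e"
          using e by (auto simp: dist_real_def simp del: of_real_add)
      qed
    qed
  qed
  then show ?thesis unfolding \<Phi>_def by simp
qed


theorem mainTheorem10:
  fixes \<beta> :: complex and a c :: real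
  assumes "Re \<beta> > 0"
    and "\<And>t. t \<in> {0..1} \<Longrightarrow> c - a * (a + t) > 0"
    and "\<And>t. t \<in> {0..1} \<Longrightarrow> c - (a + 1) * (a + t) > 0"
    and "\<And>t. t \<in> {0..1} \<Longrightarrow> c - (a + t)^2 > 0"
  shows "Gamma \<beta> * Gamma \<beta> / Gamma (2 * \<beta>) =
    complex_of_real (c - (a + 1)^2) *
    integral {0..1} (\<lambda>t::real.
       (complex_of_real (c - a * (a + t)) powr (\<beta> - 1)) *
       (complex_of_real (c - (a + 1) * (a + t)) powr (\<beta> - 1)) /
       (complex_of_real (c - (a + t)^2) powr (2 * \<beta>)) *
       complex_of_real (c - (a - t) * (a + t)) *
       (complex_of_real t powr (\<beta> - 1)) *
       (complex_of_real (1 - t) powr (\<beta> - 1)))"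
proof -
  have h: "hyps a c" unfolding hyps_def using assms(2-4) by auto
  show ?thesis using main_cx[OF h assms(1)] unfolding hC_def AA_def BB_def CC_def DD_def KK_def .
qed

end
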